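(* Let $h_1,\dots,h_n$ be $n$ distinct tasks and let $h_i^*\in\mathcal{H}_{\min}(h_i)$ for every $i\in[n]$. Let $\Phi:\{-1,1\}^m\to\mathcal{Z}$ and $g_1,\dots,g_n:\mathcal{Z}\to\mathbb{R}$ be such that $g_i\circ\Phi\in\mathcal{H}(h_i)$ for every $i\in[n]$. Let $\Phi^*=(\Phi^*_1,\dots,\Phi^*_d)\in\mathcal{H}_{\min}(\Phi)$. Then, writing $h^*=(h_1^*,\dots,h_n^* )$ and $g=(g_1,\dots,g_n)$, $$\widehat{\deg}(h^* )-\widehat{\deg}(g\circ\Phi^* )\;\ge\;\sum_{i=1}^n\deg(h_i\mid\Phi^* )-d^2,$$ where $\widehat{\deg}(h^* )=\sum_{i}\deg(h_i^* )$ and $\widehat{\deg}(g\circ\Phi^* )=\sum_i\deg(g_i)+\sum_{j=1}^d\deg(\Phi^*_j)$.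
   Context: Standing setup: integers $m\ge d\ge 1$, $\mathcal{Z}=\{-1,1\}^d$, and $\psi:\mathcal{Z}\to\{-1,1\}^m$ is injective; $\mathcal{X}:=\psi(\mathcal{Z})$. The latent distribution $p$ on $\mathcal{Z}$ has $\mathrm{supp}(p)=\mathcal{Z}$. Every $f:\{-1,1\}^n\to\mathbb{R}$ has a unique expansion $f(x)=\sum_{S\subseteq[n]}\hat f(S)\chi_S(x)$ with $\chi_S(x)=\prod_{i\in S}x_i$; $\deg(f)=\max\{|S|:\hat f(S)\ne0\}$ (degree $0$ for constants). For a multi-output map $f=(f_1,\dots,f_q)$, $\deg(f):=\sum_i\deg(f_i)$. A task is $h:\{-1,1\}^m\to\mathbb{R}$ of which only the values on $\mathcal{X}$ matter; $\mathcal{H}(h):=\{f:\{-1,1\}^m\to\mathbb{R}\mid f=h\text{ on }\mathcal{X}\}$; $\mathcal{H}_{\min}(h)$ is the set of minimum-degree elements of $\mathcal{H}(h)$, whose common degree is written $\deg(\mathcal{H}_{\min}(h))$. For the multi-output $\Phi$, $\mathcal{H}(\Phi)$ is the set of maps $\{-1,1\}^m\to\mathbb{R}^d$ agreeing with $\Phi$ on $\mathcal{X}$, and $\mathcal{H}_{\min}(\Phi)$ its elements minimizing $\sum_j\deg(\cdot_j)$. A composition $g\circ\Phi'$ with $g:\mathcal{Z}\to\mathbb{R}$ is evaluated via the multilinear (Fourier–Walsh) polynomial of $g$; its realization degree is $\widehat{\deg}(g\circ\Phi')=\deg(g)+\deg(\Phi')$, and for a tuple of realizations realization degrees add. Conditional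 degree: for a task $h$ and a representation $\Phi'$ for which some $g$ with $g\circ\Phi'\in\mathcal{H}(h)$ exists, $\deg(h\mid\Phi'):=\deg(\mathcal{H}_{\min}(h))-\max\{\deg(g):g:\mathcal{Z}\to\mathbb{R},\ g\circ\Phi'\in\mathcal{H}(h)\}$. *)

theory Defs
  imports Complex_Main
begin

type_synonym point = "nat \<Rightarrow> real"
type_synonym bfun = "point \<Rightarrow> real"

text \<open>The Boolean cube {-1,1}^n, points represented canonically as functions
  nat => real with coordinates i < n in {-1,1} and coordinates i >= n equal to 1.\<close>
definition cube :: "nat \<Rightarrow> point set" where
  "cube n = {x. (\<forall>i<n. x i = 1 \<or> x i = -1) \<and> (\<forall>i\<ge>n. x i = 1)}"

definition chi :: "nat set \<Rightarrow> point \<Rightarrow> real" where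
  "chi S x = (\<Prod>i\<in>S. x i)"

definition fcoeff :: "nat \<Rightarrow> bfun \<Rightarrow> nat set \<Rightarrow> real" where
  "fcoeff n f S = (\<Sum>x\<in>cube n. f x * chi S x) / 2 ^ n"

definition bdeg :: "nat \<Rightarrow> bfun \<Rightarrow> nat" where
  "bdeg n f = Max ({card S | S. S \<subseteq> {..<n} \<and> fcoeff n f S \<noteq> 0} \<union> {0})"

definition mleval :: "nat \<Rightarrow> bfun \<Rightarrow> point \<Rightarrow> real" where
  "mleval n g y = (\<Sum>S\<in>Pow {..<n}. fcoeff n g S * chi S y)"

text \<open>Composition g o Phi' for a d-output representation Phi' (components Phis j, j<d).\<close>
definition comp_rep :: "nat \<Rightarrow> bfun \<Rightarrow> (nat \<Rightarrow> bfun) \<Rightarrow> bfun" where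
  "comp_rep d g Phis = (\<lambda>x. mleval d g (\<lambda>j. if j < d then Phis j x else 1))"

definition Xset :: "nat \<Rightarrow> (point \<Rightarrow> point) \<Rightarrow> point set" where
  "Xset d psi = psi ` cube d"

definition Hset :: "point set \<Rightarrow> bfun \<Rightarrow> bfun set" where
  "Hset X h = {f. \<forall>x\<in>X. f x = h x}"

definition Hmin :: "nat \<Rightarrow> point set \<Rightarrow> bfun \<Rightarrow> bfun set" where
  "Hmin m X h = {f \<in> Hset X h. \<forall>f'\<in>Hset X h. bdeg m f \<le> bdeg m f'}"

definition Hmin_deg :: "nat \<Rightarrow> point set \<Rightarrow> bfun \<Rightarrow> nat" where
  "Hmin_deg m X h = (LEAST k. \<exists>f\<in>Hset X h. bdeg m f = k)"

definition mdeg :: "nat \<Rightarrow> nat \<Rightarrow> (nat \<Rightarrow> bfun) \<Rightarrow> nat" where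
  "mdeg m d Phis = (\<Sum>j<d. bdeg m (Phis j))"

definition HPhi :: "nat \<Rightarrow> point set \<Rightarrow> (point \<Rightarrow> point) \<Rightarrow> (nat \<Rightarrow> bfun) set" where
  "HPhi d X Phi = {Phis. \<forall>j<d. \<forall>x\<in>X. Phis j x = Phi x j}"

definition HPhi_min :: "nat \<Rightarrow> nat \<Rightarrow> point set \<Rightarrow> (point \<Rightarrow> point) \<Rightarrow> (nat \<Rightarrow> bfun) set" where
  "HPhi_min m d X Phi = {Phis \<in> HPhi d X Phi. \<forall>Q\<in>HPhi d X Phi. mdeg m d Phis \<le> mdeg m d Q}"

definition cond_deg :: "nat \<Rightarrow> nat \<Rightarrow> point set \<Rightarrow> bfun \<Rightarrow> (nat \<Rightarrow> bfun) \<Rightarrow> int" where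
  "cond_deg m d X h Phis =
     int (Hmin_deg m X h) - int (Max {bdeg d g | g. comp_rep d g Phis \<in> Hset X h})"

end

theory Submission
  imports Defs
begin

lemma cube0: "cube 0 = {\<lambda>_. 1}"
  unfolding cube_def by auto

lemma cube_Suc: "cube (Suc n) = (\<lambda>x. x(n:=1)) ` cube n \<union> (\<lambda>x. x(n:=-1)) ` cube n"
proof (rule set_eqI, rule iffI)
  fix x assume x: "x \<in> cube (Suc n)"
  let ?y = "x(n:=1)"
  have y: "?y \<in> cube n" using x unfolding cube_def
    by (auto simp: less_Suc_eq_le)
  have "x n = 1 \<or> x n = -1" using x unfolding cube_def by auto
  then show "x \<in> (\<lambda>x. x(n:=1)) ` cube n \<union> (\<lambda>x. x(n:=-1)) ` cube n"
  proof
    assume "x n = 1" then have "x = ?y(n:=1)" by auto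
    then show ?thesis using y by blast
  next
    assume "x n = -1" then have "x = ?y(n:=-1)" by auto
    then show ?thesis using y by blast
  qed
next
  fix x assume "x \<in> (\<lambda>x. x(n:=1)) ` cube n \<union> (\<lambda>x. x(n:=-1)) ` cube n"
  then obtain y s where y: "y \<in> cube n" "s = 1 \<or> s = -1" and x: "x = y(n:=s)" by blast
  have "\<forall>i<Suc n. x i = 1 \<or> x i = -1"
    using y unfolding x cube_def by (auto simp: less_Suc_eq)
  moreover have "\<forall>i\<ge>Suc n. x i = 1"
    using y unfolding x cube_def by auto
  ultimately show "x \<in> cube (Suc n)" unfolding cube_def by blast
qed

lemma cube_n: "x \<in> cube n \<Longrightarrow> x n = 1"
  unfolding cube_def by auto

lemma cube_inj: "inj_on (\<lambda>x. x(n:=s)) (cube n)"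
proof (rule inj_onI)
  fix x y assume "x \<in> cube n" "y \<in> cube n" "x(n:=s) = y(n:=s)"
  then show "x = y" using cube_n[of x n] cube_n[of y n]
    by (metis fun_upd_triv fun_upd_upd)
qed

lemma finite_cube: "finite (cube n)"
  by (induction n) (auto simp: cube0 cube_Suc)

lemma sum_cube_Suc:
  "(\<Sum>x\<in>cube (Suc n). F x) = (\<Sum>x\<in>cube n. F (x(n:=1)) + F (x(n:=-1)))"
proof -
  have disj: "(\<lambda>x. x(n:=1)) ` cube n \<inter> (\<lambda>x. x(n:=-1)) ` cube n = {}"
  proof -
    { fix x y :: point assume "x(n:=1) = y(n:=-1)"
      then have "(x(n:=1)) n = (y(n:=-1)) n" by simp
      then have False by simp }
    then show ?thesis by blast
  qed
  have "(\<Sum>x\<in>cube (Suc n). F x) = (\<Sum>x\<in>(\<lambda>x. x(n:=1)) ` cube n. F x) + (\<Sum>x\<in>(\<lambda>x. x(n:=-1)) ` cube n. F x)"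
    unfolding cube_Suc by (rule sum.union_disjoint) (auto simp: finite_cube disj)
  also have "\<dots> = (\<Sum>x\<in>cube n. F (x(n:=1))) + (\<Sum>x\<in>cube n. F (x(n:=-1)))"
    by (simp add: sum.reindex[OF cube_inj])
  finally show ?thesis by (simp add: sum.distrib)
qed

lemma card_cube: "card (cube n) = 2 ^ n"
proof (induction n)
  case 0 then show ?case by (simp add: cube0)
next
  case (Suc n)
  have "card (cube (Suc n)) = (\<Sum>x\<in>cube (Suc n). 1)" by simp
  also have "\<dots> = (\<Sum>x\<in>cube n. (1::nat) + 1)" by (rule sum_cube_Suc)
  also have "\<dots> = 2 * card (cube n)" by simp
  finally show ?case using Suc by simp
qed

lemma chi_upd:
  assumes "finite S"
  shows "chi S (x(m:=s)) = (if m \<in> S then s * chi (S - {m}) x else chi S x)"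
proof (cases "m \<in> S")
  case True
  have "chi S (x(m:=s)) = (x(m:=s)) m * (\<Prod>i\<in>S-{m}. (x(m:=s)) i)"
    unfolding chi_def using prod.remove[OF assms True, of "x(m:=s)"] by simp
  also have "(\<Prod>i\<in>S-{m}. (x(m:=s)) i) = chi (S-{m}) x"
    unfolding chi_def by (rule prod.cong) auto
  finally show ?thesis using True by (simp del: fun_upd_apply add: fun_upd_same)
next
  case False
  then show ?thesis unfolding chi_def by (auto intro!: prod.cong)
qed

lemma chi_cube_sq: "x \<in> cube n \<Longrightarrow> S \<subseteq> {..<n} \<Longrightarrow> chi S x * chi S x = 1"
  unfolding chi_def cube_def
  by (subst prod.distrib[symmetric], rule prod.neutral) auto

lemma orth:
  "S \<subseteq> {..<n} \<Longrightarrow> T \<subseteq> {..<n} \<Longrightarrow>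
   (\<Sum>x\<in>cube n. chi S x * chi T x) = (if S = T then 2 ^ n else 0)"
proof (induction n arbitrary: S T)
  case 0 then show ?case by (simp add: cube0 chi_def)
next
  case (Suc n)
  have fS: "finite S" "finite T" using Suc.prems finite_subset by blast+
  have S': "S - {n} \<subseteq> {..<n}" "T - {n} \<subseteq> {..<n}" using Suc.prems by auto
  have chi1: "chi U (x(n:=1)) = chi (U - {n}) x" if "finite U" "x \<in> cube n" for U x
    using chi_upd[OF that(1), of x n 1] cube_n[OF that(2)] 
    by (simp add: fun_upd_triv)
  have "(\<Sum>x\<in>cube (Suc n). chi S x * chi T x) =
     (\<Sum>x\<in>cube n. ((if n \<in> S \<longleftrightarrow> n \<in> T then 2 else 0)) * (chi (S-{n}) x * chi (T-{n}) x))"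
    unfolding sum_cube_Suc
  proof (rule sum.cong[OF refl])
    fix x assume x: "x \<in> cube n"
    have e: "x(n:=1) = x" using cube_n[OF x] by auto
    have a: "chi U x = chi (U - {n}) x" if "finite U" for U
      using chi1[OF that x] e by simp
    show "chi S (x(n := 1)) * chi T (x(n := 1)) + chi S (x(n := - 1)) * chi T (x(n := - 1)) =
      (if (n \<in> S) = (n \<in> T) then 2 else 0) * (chi (S - {n}) x * chi (T - {n}) x)"
    proof -
      have aS: "chi S x = chi (S - {n}) x" using a[OF fS(1)] .
      have aT: "chi T x = chi (T - {n}) x" using a[OF fS(2)] .
      have sS: "chi S (x(n := - 1)) = (if n \<in> S then -1 else 1) * chi (S - {n}) x"
        using chi_upd[OF fS(1), of x n "-1"] aS by (cases "n \<in> S") (simp_all only: if_True if_False mult_1 mult_minus1)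
      have sT: "chi T (x(n := - 1)) = (if n \<in> T then -1 else 1) * chi (T - {n}) x"
        using chi_upd[OF fS(2), of x n "-1"] aT by (cases "n \<in> T") (simp_all only: if_True if_False mult_1 mult_minus1)
      show ?thesis unfolding e sS sT aS aT by (cases "n \<in> S"; cases "n \<in> T") simp_all
    qed
  qed
  also have "\<dots> = (if n \<in> S \<longleftrightarrow> n \<in> T then 2 else 0) * (if S - {n} = T - {n} then 2 ^ n else 0)"
    by (simp add: sum_distrib_left[symmetric] Suc.IH[OF S'])
  also have "\<dots> = (if S = T then 2 ^ Suc n else 0)"
  proof -
    have "S = T \<longleftrightarrow> (n \<in> S \<longleftrightarrow> n \<in> T) \<and> S - {n} = T - {n}" by blast
    then show ?thesis by auto
  qed
  finally show ?case .
qed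


lemma bdeg_le: "bdeg n f \<le> n"
proof -
  have "{card S | S. S \<subseteq> {..<n} \<and> fcoeff n f S \<noteq> 0} \<union> {0} \<subseteq> {..n}"
    using card_mono[of "{..<n}"] by fastforce
  then show ?thesis unfolding bdeg_def
    by (metis (no_types, lifting) Max_le_iff atMost_iff finite_atMost finite_subset
        insert_not_empty subset_iff sup_bot.comm_neutral Un_insert_right)
qed

lemma chi_prod_sum:
  assumes x: "x \<in> cube n" and y: "y \<in> cube n"
  shows "(\<Sum>S\<in>Pow {..<n}. chi S y * chi S x) = (if y = x then 2 ^ n else 0)"
proof -
  have "(\<Sum>S\<in>Pow {..<n}. chi S y * chi S x) = (\<Sum>S\<in>Pow {..<n}. (\<Prod>i\<in>S. y i * x i) * (\<Prod>i\<in>{..<n}-S. 1))"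
    unfolding chi_def by (simp add: prod.distrib)
  also have "\<dots> = (\<Prod>i<n. y i * x i + 1)"
    by (rule prod_add[symmetric]) simp
  also have "\<dots> = (if y = x then 2 ^ n else 0)"
  proof (cases "y = x")
    case True
    have "(\<Prod>i<n. y i * x i + 1) = (\<Prod>i<n. (2::real))"
      using x unfolding True cube_def by (intro prod.cong) auto
    then show ?thesis using True by simp
  next
    case False
    then obtain i where "y i \<noteq> x i" by auto
    moreover have "i < n" using x y calculation unfolding cube_def by (metis (mono_tags, lifting) mem_Collect_eq not_less)
    ultimately have "y i * x i + 1 = 0" using x y unfolding cube_def
      by (metis (mono_tags, lifting) add.inverse_inverse mem_Collect_eq mult_1 mult_minus_left neg_eq_iff_add_eq_0)
    then have "(\<Prod>i<n. y i * x i + 1) = 0" using \<open>i < n\<close>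
      by (meson finite_lessThan lessThan_iff prod_zero)
    then show ?thesis using False by simp
  qed
  finally show ?thesis .
qed

lemma mleval_inv:
  assumes x: "x \<in> cube n"
  shows "mleval n g x = g x"
proof -
  have "mleval n g x = (\<Sum>S\<in>Pow {..<n}. \<Sum>y\<in>cube n. g y * (chi S y * chi S x) / 2 ^ n)"
    unfolding mleval_def fcoeff_def by (simp add: sum_divide_distrib sum_distrib_right mult.assoc)
  also have "\<dots> = (\<Sum>y\<in>cube n. g y * (\<Sum>S\<in>Pow {..<n}. chi S y * chi S x) / 2 ^ n)"
    by (subst sum.swap) (simp add: sum_divide_distrib sum_distrib_left)
  also have "\<dots> = (\<Sum>y\<in>cube n. if y = x then g x else 0)"
    by (rule sum.cong) (auto simp: chi_prod_sum x)
  also have "\<dots> = g x" using x finite_cube by simp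
  finally show ?thesis .
qed

definition Pm :: "nat \<Rightarrow> (nat set \<Rightarrow> real) \<Rightarrow> point \<Rightarrow> real" where
  "Pm m c x = (\<Sum>S\<in>Pow {..<m}. c S * chi S x)"

lemma deg_bound:
  assumes f: "\<forall>x\<in>cube m. f x = Pm m c x" and c: "\<forall>S. k < card S \<longrightarrow> c S = 0"
  shows "bdeg m f \<le> k"
proof -
  have fc: "fcoeff m f T = c T" if T: "T \<subseteq> {..<m}" for T
  proof -
    have "(\<Sum>x\<in>cube m. f x * chi T x) = (\<Sum>x\<in>cube m. \<Sum>S\<in>Pow {..<m}. c S * (chi S x * chi T x))"
      using f unfolding Pm_def by (intro sum.cong) (auto simp: sum_distrib_right mult.assoc)
    also have "\<dots> = (\<Sum>S\<in>Pow {..<m}. c S * (\<Sum>x\<in>cube m. chi S x * chi T x))"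
      by (subst sum.swap) (simp add: sum_distrib_left)
    also have "\<dots> = (\<Sum>S\<in>Pow {..<m}. if S = T then c T * 2 ^ m else 0)"
      using T by (intro sum.cong) (auto simp: orth)
    also have "\<dots> = c T * 2 ^ m" using T by simp
    finally show ?thesis unfolding fcoeff_def by simp
  qed
  have sub: "{card S | S. S \<subseteq> {..<m} \<and> fcoeff m f S \<noteq> 0} \<union> {0} \<subseteq> {..k}"
    using fc c by (auto simp: not_less[symmetric])
  show ?thesis unfolding bdeg_def
    by (rule Max.boundedI) (use sub finite_subset in auto)
qed

lemma interp0:
  assumes X: "X \<subseteq> cube m" and cX: "card X \<le> 1"
  shows "\<exists>c. (\<forall>S. 0 < card S \<longrightarrow> c S = 0) \<and> (\<forall>x\<in>X. f x = Pm m c x)"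
proof -
  have fin: "finite X" using X finite_cube finite_subset by blast
  define x0 where "x0 = (SOME x. x \<in> X)"
  define c where "c = (\<lambda>S::nat set. if S = {} then f x0 else 0)"
  have "Pm m c x = f x0" for x
  proof -
    have "Pm m c x = (\<Sum>S\<in>Pow {..<m}. if S = {} then f x0 * chi S x else 0)"
      unfolding Pm_def c_def by (intro sum.cong) auto
    also have "\<dots> = f x0" by (simp add: chi_def)
    finally show ?thesis .
  qed
  moreover have "x = x0" if "x \<in> X" for x
    using that cX fin card_le_Suc0_iff_eq[of X] someI[of "\<lambda>x. x \<in> X" x] unfolding x0_def
    by (metis One_nat_def)
  ultimately show ?thesis by (intro exI[of _ c]) (auto simp: c_def)
qed

lemma Pm_Suc:
  "Pm (Suc m) (\<lambda>S. if m \<in> S then cB (S - {m}) else cA S) x = Pm m cA x + x m * Pm m cB x"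
proof -
  let ?c = "\<lambda>S. if m \<in> S then cB (S - {m}) else cA S"
  have disj: "Pow {..<m} \<inter> insert m ` Pow {..<m} = {}" by auto
  have inj: "inj_on (insert m) (Pow {..<m})"
    by (rule inj_onI) (metis PowD insert_ident lessThan_iff less_irrefl subsetD)
  have "Pm (Suc m) ?c x = (\<Sum>S\<in>Pow {..<m}. ?c S * chi S x) + (\<Sum>S\<in>insert m ` Pow {..<m}. ?c S * chi S x)"
    unfolding Pm_def lessThan_Suc Pow_insert by (rule sum.union_disjoint) (use disj in auto)
  also have "(\<Sum>S\<in>Pow {..<m}. ?c S * chi S x) = Pm m cA x"
    unfolding Pm_def by (intro sum.cong) auto
  also have "(\<Sum>S\<in>insert m ` Pow {..<m}. ?c S * chi S x) = (\<Sum>S\<in>Pow {..<m}. ?c (insert m S) * chi (insert m S) x)"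
    by (rule sum.reindex[OF inj, unfolded comp_def])
  also have "\<dots> = (\<Sum>S\<in>Pow {..<m}. x m * (cB S * chi S x))"
  proof (intro sum.cong refl)
    fix S assume S: "S \<in> Pow {..<m}"
    then have "m \<notin> S" "finite S" using finite_subset by auto
    then show "?c (insert m S) * chi (insert m S) x = x m * (cB S * chi S x)"
      unfolding chi_def by simp
  qed
  also have "\<dots> = x m * Pm m cB x" unfolding Pm_def by (simp add: sum_distrib_left)
  finally show ?thesis .
qed

lemma Pm_upd: "Pm m c (x(m:=s)) = Pm m c x"
  unfolding Pm_def
proof (intro sum.cong refl)
  fix S assume "S \<in> Pow {..<m}"
  then have "m \<notin> S" "finite S" using finite_subset by auto
  then show "c S * chi S (x(m := s)) = c S * chi S x" using chi_upd by simp
qed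


lemma cube_proj: "x \<in> cube (Suc m) \<Longrightarrow> x(m:=1) \<in> cube m"
  unfolding cube_def by (auto simp: less_Suc_eq_le)

lemma interp:
  "X \<subseteq> cube m \<Longrightarrow> card X \<le> 2 ^ k \<Longrightarrow>
   \<exists>c. (\<forall>S. k < card S \<longrightarrow> c S = 0) \<and> (\<forall>x\<in>X. f x = Pm m c x)"
proof (induction m arbitrary: X k f)
  case 0
  have "card X \<le> card (cube 0)" using 0 finite_cube card_mono by blast
  then have "card X \<le> 1" by (simp add: cube0)
  from interp0[OF 0(1) this, of f] show ?case by (meson le0 le_less_trans)
next
  case (Suc m)
  show ?case
  proof (cases k)
    case 0
    from interp0[OF Suc.prems(1), of f] Suc.prems(2) 0 show ?thesis by auto
  next
    case (Suc k')
    have finX: "finite X" using Suc.prems(1) finite_cube finite_subset by blast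
    define pr where "pr = (\<lambda>x::point. x(m:=1))"
    define Xp where "Xp = pr ` {x\<in>X. x m = 1}"
    define Xn where "Xn = pr ` {x\<in>X. x m = -1}"
    have Xpc: "Xp \<subseteq> cube m" "Xn \<subseteq> cube m"
      using Suc.prems(1) cube_proj unfolding Xp_def Xn_def pr_def by blast+
    have "card Xp + card Xn \<le> card {x\<in>X. x m = 1} + card {x\<in>X. x m = -1}"
      unfolding Xp_def Xn_def by (intro add_mono card_image_le) (use finX in auto)
    also have "\<dots> = card ({x\<in>X. x m = 1} \<union> {x\<in>X. x m = -1})"
      by (rule card_Un_disjoint[symmetric]) (use finX in auto)
    also have "\<dots> \<le> card X" by (rule card_mono[OF finX]) auto
    finally have cpn: "card Xp + card Xn \<le> 2 * 2 ^ k'" using Suc.prems(2) Suc by simp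
    define Xs where "Xs = (if card Xp \<le> card Xn then Xp else Xn)"
    have Xs1: "Xs \<subseteq> cube m" using Xpc unfolding Xs_def by simp
    have Xs2: "card Xs \<le> 2 ^ k'"
    proof (cases "card Xp \<le> card Xn")
      case True then show ?thesis using cpn unfolding Xs_def by simp
    next
      case False then show ?thesis using cpn unfolding Xs_def by simp
    qed
    have Xs3: "Xp \<inter> Xn \<subseteq> Xs" unfolding Xs_def by simp
    note Xs = Xs1 Xs2 Xs3
    obtain cB where cB: "\<forall>S. k' < card S \<longrightarrow> cB S = 0"
      "\<forall>y\<in>Xs. (\<lambda>y. (f y - f (y(m:=-1))) / 2) y = Pm m cB y"
      using Suc.IH[OF Xs(1) Xs(2), of "\<lambda>y. (f y - f (y(m:=-1))) / 2"] by blast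
    define fa where "fa = (\<lambda>y. if y \<in> Xp then f y - Pm m cB y else f (y(m:=-1)) + Pm m cB y)"
    have "card (Xp \<union> Xn) \<le> card Xp + card Xn" by (rule card_Un_le)
    then have "card (Xp \<union> Xn) \<le> 2 ^ k" using cpn Suc by simp
    then obtain cA where cA: "\<forall>S. k < card S \<longrightarrow> cA S = 0"
      "\<forall>y\<in>Xp \<union> Xn. fa y = Pm m cA y"
      using Suc.IH[of "Xp \<union> Xn" k fa] Xpc by blast
    define c where "c = (\<lambda>S. if m \<in> S then cB (S - {m}) else cA S)"
    show ?thesis
    proof (intro exI[of _ c] conjI allI impI ballI)
      fix S :: "nat set" assume S: "k < card S"
      show "c S = 0"
      proof (cases "m \<in> S")
        case True
        have "finite S" using S card.infinite by force
        then have "card (S - {m}) = card S - 1" using True by simp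
        then show ?thesis using True S cB(1) Suc unfolding c_def by auto
      next
        case False then show ?thesis using S cA(1) unfolding c_def by auto
      qed
    next
      fix x assume xX: "x \<in> X"
      have xc: "x \<in> cube (Suc m)" using xX Suc.prems(1) by blast
      then have xm: "x m = 1 \<or> x m = -1" unfolding cube_def by auto
      let ?y = "pr x"
      have val: "Pm (Suc m) c x = Pm m cA ?y + x m * Pm m cB ?y"
        unfolding c_def Pm_Suc pr_def Pm_upd ..
      from xm show "f x = Pm (Suc m) c x"
      proof
        assume x1: "x m = 1"
        have yx: "?y = x" unfolding pr_def using x1 by auto
        have yp: "?y \<in> Xp" unfolding Xp_def using xX x1 by blast
        have "fa ?y = Pm m cA ?y" using cA(2) yp by blast
        then have "Pm m cA ?y = f ?y - Pm m cB ?y" using yp unfolding fa_def by simp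
        then show ?thesis using val x1 yx by simp
      next
        assume x2: "x m = -1"
        have yx: "?y(m:=-1) = x" unfolding pr_def using x2 by auto
        have yn: "?y \<in> Xn" unfolding Xn_def using xX x2 by blast
        show ?thesis
        proof (cases "?y \<in> Xp")
          case True
          then have "?y \<in> Xs" using yn Xs(3) by blast
          then have "(f ?y - f (?y(m:=-1))) / 2 = Pm m cB ?y" using cB(2) by blast
          then have pb: "Pm m cB ?y = (f ?y - f x) / 2" using yx by simp
          have "fa ?y = Pm m cA ?y" using cA(2) True by blast
          then have "Pm m cA ?y = f ?y - Pm m cB ?y" using True unfolding fa_def by simp
          then show ?thesis using val x2 pb by (simp add: field_simps)
        next
          case False
          have "fa ?y = Pm m cA ?y" using cA(2) yn by blast
          then have "Pm m cA ?y = f x + Pm m cB ?y" using False yx unfolding fa_def by simp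
          then show ?thesis using val x2 by simp
        qed
      qed
    qed
  qed
qed


theorem theorem2:
  fixes m d n :: nat
    and psi :: "point \<Rightarrow> point"
    and Phi :: "point \<Rightarrow> point"
    and h hstar g :: "nat \<Rightarrow> bfun"
    and Phistar :: "nat \<Rightarrow> bfun"
  assumes "1 \<le> d" and "d \<le> m"
    and "inj_on psi (cube d)" and "psi ` cube d \<subseteq> cube m"
    and "Phi ` cube m \<subseteq> cube d"
    and "\<forall>i<n. \<forall>j<n. i \<noteq> j \<longrightarrow> (\<exists>x\<in>Xset d psi. h i x \<noteq> h j x)"
    and "\<forall>i<n. hstar i \<in> Hmin m (Xset d psi) (h i)"
    and "\<forall>i<n. (g i \<circ> Phi) \<in> Hset (Xset d psi) (h i)"
    and "Phistar \<in> HPhi_min m d (Xset d psi) Phi"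
  shows "int (\<Sum>i<n. bdeg m (hstar i))
           - (int (\<Sum>i<n. bdeg d (g i)) + int (mdeg m d Phistar))
         \<ge> (\<Sum>i<n. cond_deg m d (Xset d psi) (h i) Phistar) - int (d ^ 2)"
proof -
  define X where "X = Xset d psi"
  have Xc: "X \<subseteq> cube m" using assms(4) unfolding X_def Xset_def by simp
  have cX: "card X \<le> 2 ^ d"
    unfolding X_def Xset_def using card_image_le[OF finite_cube, of psi d] card_cube by simp
  have "\<forall>j. \<exists>c. (\<forall>S. d < card S \<longrightarrow> c S = 0) \<and> (\<forall>x\<in>X. Phi x j = Pm m c x)"
  proof
    fix j show "\<exists>c. (\<forall>S. d < card S \<longrightarrow> c S = 0) \<and> (\<forall>x\<in>X. Phi x j = Pm m c x)"
      using interp[OF Xc cX, of "\<lambda>x. Phi x j"] .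
  qed
  then obtain C where C: "\<And>j. (\<forall>S. d < card S \<longrightarrow> C j S = 0) \<and> (\<forall>x\<in>X. Phi x j = Pm m (C j) x)"
    by (metis choice)
  define Q where "Q = (\<lambda>j x. Pm m (C j) x)"
  have QH: "Q \<in> HPhi d X Phi" unfolding HPhi_def Q_def using C by simp
  have Qdeg: "bdeg m (Q j) \<le> d" for j
    unfolding Q_def by (rule deg_bound) (use C in auto)
  have "mdeg m d Phistar \<le> mdeg m d Q"
    using assms(9) QH unfolding HPhi_min_def X_def by blast
  also have "\<dots> \<le> (\<Sum>j<d. d)" unfolding mdeg_def by (rule sum_mono) (rule Qdeg)
  finally have D: "mdeg m d Phistar \<le> d ^ 2" by (simp add: power2_eq_square)
  define M where "M = (\<lambda>i. Max {bdeg d g | g. comp_rep d g Phistar \<in> Hset X (h i)})"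
  have hdeg: "Hmin_deg m X (h i) = bdeg m (hstar i)" if i: "i < n" for i
  proof -
    have hs: "hstar i \<in> Hset X (h i)" "\<forall>f'\<in>Hset X (h i). bdeg m (hstar i) \<le> bdeg m f'"
      using assms(7) i unfolding Hmin_def X_def by auto
    show ?thesis unfolding Hmin_deg_def
      by (rule Least_equality) (use hs in auto)
  qed
  have gM: "bdeg d (g i) \<le> M i" if i: "i < n" for i
  proof -
    have "comp_rep d (g i) Phistar \<in> Hset X (h i)"
      unfolding Hset_def mem_Collect_eq
    proof (intro ballI)
      fix x assume x: "x \<in> X"
      have xm: "x \<in> cube m" using x Xc by blast
      have pd: "Phi x \<in> cube d" using assms(5) xm by blast
      have e: "(\<lambda>j. if j < d then Phistar j x else 1) = Phi x"
      proof
        fix j show "(if j < d then Phistar j x else 1) = Phi x j"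
          using assms(9) x pd unfolding HPhi_min_def HPhi_def X_def cube_def by auto
      qed
      have "comp_rep d (g i) Phistar x = g i (Phi x)"
        unfolding comp_rep_def e using mleval_inv[OF pd] .
      also have "\<dots> = h i x" using assms(8) i x unfolding Hset_def X_def by auto
      finally show "comp_rep d (g i) Phistar x = h i x" .
    qed
    moreover have "finite {bdeg d g | g. comp_rep d g Phistar \<in> Hset X (h i)}"
      by (rule finite_subset[of _ "{..d}"]) (use bdeg_le in auto)
    ultimately show ?thesis unfolding M_def by (intro Max_ge) auto
  qed
  have cd: "cond_deg m d (Xset d psi) (h i) Phistar = int (bdeg m (hstar i)) - int (M i)"
    if "i < n" for i
    unfolding cond_deg_def M_def X_def[symmetric] using hdeg[OF that] by simp
  have "(\<Sum>i<n. cond_deg m d (Xset d psi) (h i) Phistar) = (\<Sum>i<n. int (bdeg m (hstar i)) - int (M i))"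
    by (rule sum.cong) (use cd in auto)
  also have "\<dots> = int (\<Sum>i<n. bdeg m (hstar i)) - (\<Sum>i<n. int (M i))"
    by (simp add: sum_subtractf)
  finally have E: "(\<Sum>i<n. cond_deg m d (Xset d psi) (h i) Phistar) = int (\<Sum>i<n. bdeg m (hstar i)) - (\<Sum>i<n. int (M i))" .
  have G: "int (\<Sum>i<n. bdeg d (g i)) \<le> (\<Sum>i<n. int (M i))"
    unfolding of_nat_sum by (rule sum_mono) (use gM in auto)
  show ?thesis using E G D by linarith
qed

end
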